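(* For every $n\in\mathbb N$, $2n\,\theta(s_n^2)=4n-2$. In particular $\lim_{n\to\infty}\theta(s_n^2)=2$.
   Context: $F$ is Thompson's group: the group of piecewise linear homeomorphisms of $[0,1]$ with finitely many dyadic breakpoints and slopes powers of $2$, with product $(fg)(t)=g(f(t))$; its standard generators are $x_0$ ($x_0(t)=2t$ on $[0,1/4]$, $t+1/4$ on $[1/4,1/2]$, $t/2+1/2$ on $[1/2,1]$) and $x_{k+1}=\varphi_R(x_k)$, where $\varphi_R(g)(t)=t$ on $[0,1/2]$ and $\tfrac12(1+g(2t-1))$ on $[1/2,1]$. Let $S$ be the set of dyadic rationals $t=\sum_{k=1}^m a_k2^{-k}$ ($a_k\in\{0,1\}$) with $\sum_ka_k$ even; Jones's oriented subgroup is $\vec F=\{g\in F: g(S)=S\}$ (equivalently the set of $g$ whose planar graph is 2-colourable). $\theta:\mathbb C[F]\to\mathbb C$ is the linear functional with $\theta(g)=1$ if $g\in\vec F$ and $\theta(g)=0$ otherwise, for $g\in F$. In $\mathbb C[F]$, $a_k=(x_k+x_k^{-1})/\sqrt2$ and $s_n=(a_0+\dots+a_{n-1})/\sqrt n$. *)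

theory Defs
  imports Complex_Main
begin

text \<open>Elements of Thompson's group F are represented as functions real \<Rightarrow> real which are
  the identity outside [0,1] (so that each element has a unique representative).\<close>

definition dyadic :: "real \<Rightarrow> bool" where
  "dyadic x \<longleftrightarrow> (\<exists>(k::int) (m::nat). x = of_int k / 2 ^ m)"

definition thompsonF :: "(real \<Rightarrow> real) set" where
  "thompsonF = {f.
     (\<forall>t. t \<notin> {0..1} \<longrightarrow> f t = t) \<and>
     bij_betw f {0..1} {0..1} \<and> continuous_on {0..1} f \<and>
     (\<exists>(bs::real list) (ks::int list) (cs::real list).
        length bs \<ge> 2 \<and> hd bs = 0 \<and> last bs = 1 \<and> sorted_wrt (<) bs \<and>
        (\<forall>b\<in>set bs. dyadic b) \<and>
        length ks = length bs - 1 \<and> length cs = length bs - 1 \<and>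
        (\<forall>i < length bs - 1. \<forall>t \<in> {bs!i..bs!(i+1)}.
            f t = 2 powr (of_int (ks!i)) * t + cs!i))}"

definition evenS :: "real set" where
  "evenS = {t. \<exists>(m::nat) (a::nat \<Rightarrow> nat). (\<forall>k. a k \<in> {0,1}) \<and>
              t = (\<Sum>k=1..m. real (a k) / 2 ^ k) \<and> even (\<Sum>k=1..m. a k)}"

definition orientedF :: "(real \<Rightarrow> real) set" where
  "orientedF = {g \<in> thompsonF. g ` evenS = evenS}"

definition x0 :: "real \<Rightarrow> real" where
  "x0 t = (if t < 0 \<or> t > 1 then t
           else if t \<le> 1/4 then 2 * t
           else if t \<le> 1/2 then t + 1/4
           else t / 2 + 1/2)"

definition phiR :: "(real \<Rightarrow> real) \<Rightarrow> real \<Rightarrow> real" where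
  "phiR g t = (if t \<le> 1/2 \<or> t > 1 then t else (1 + g (2 * t - 1)) / 2)"

fun xgen :: "nat \<Rightarrow> real \<Rightarrow> real" where
  "xgen 0 = x0"
| "xgen (Suc k) = phiR (xgen k)"

definition finv :: "(real \<Rightarrow> real) \<Rightarrow> real \<Rightarrow> real" where
  "finv f t = (if t \<in> {0..1} then the_inv_into {0..1} f t else t)"

text \<open>Group algebra C[F]: finitely supported functions F \<Rightarrow> complex.
  The group product is (f g)(t) = g (f t), i.e. f g = g \<circ> f.\<close>
type_synonym galg = "(real \<Rightarrow> real) \<Rightarrow> complex"

definition gelt :: "(real \<Rightarrow> real) \<Rightarrow> galg" where
  "gelt g = (\<lambda>h. if h = g then 1 else 0)"

definition gmult :: "galg \<Rightarrow> galg \<Rightarrow> galg" where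
  "gmult u v = (\<lambda>h. \<Sum>p \<in> {p. u (fst p) \<noteq> 0 \<and> v (snd p) \<noteq> 0 \<and> snd p \<circ> fst p = h}.
                       u (fst p) * v (snd p))"

definition theta :: "galg \<Rightarrow> complex" where
  "theta u = (\<Sum>g \<in> {g. u g \<noteq> 0 \<and> g \<in> orientedF}. u g)"

definition a_elt :: "nat \<Rightarrow> galg" where
  "a_elt k = (\<lambda>h. (gelt (xgen k) h + gelt (finv (xgen k)) h) / complex_of_real (sqrt 2))"

definition s_elt :: "nat \<Rightarrow> galg" where
  "s_elt n = (\<lambda>h. (\<Sum>k<n. a_elt k h) / complex_of_real (sqrt (real n)))"

end

theory Submission
  imports Defs
begin



definition XX :: "real \<Rightarrow> real \<Rightarrow> real" where
  "XX L t = (if t < 0 \<or> t > 1 then t else max t (min (2*t - (1-L)) (min (t + L/4) ((1+t)/2))))"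
definition YY :: "real \<Rightarrow> real \<Rightarrow> real" where
  "YY L t = (if t < 0 \<or> t > 1 then t else min t (max ((t + (1-L))/2) (max (t - L/4) (2*t-1))))"

lemma XX_p1: "0 < L \<Longrightarrow> L \<le> 1 \<Longrightarrow> 0 \<le> t \<Longrightarrow> t \<le> 1-L \<Longrightarrow> XX L t = t"
  by (auto simp: XX_def max_def min_def)
lemma XX_p2: "0 < L \<Longrightarrow> L \<le> 1 \<Longrightarrow> 1-L \<le> t \<Longrightarrow> t \<le> 1-L+L/4 \<Longrightarrow> XX L t = 2*t - (1-L)"
  by (auto simp: XX_def max_def min_def)
lemma XX_p3: "0 < L \<Longrightarrow> L \<le> 1 \<Longrightarrow> 1-L+L/4 \<le> t \<Longrightarrow> t \<le> 1-L/2 \<Longrightarrow> XX L t = t + L/4"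
  by (auto simp: XX_def max_def min_def)
lemma XX_p4: "0 < L \<Longrightarrow> L \<le> 1 \<Longrightarrow> 1-L/2 \<le> t \<Longrightarrow> t \<le> 1 \<Longrightarrow> XX L t = (1+t)/2"
  by (auto simp: XX_def max_def min_def)
lemma YY_p1: "0 < L \<Longrightarrow> L \<le> 1 \<Longrightarrow> 0 \<le> t \<Longrightarrow> t \<le> 1-L \<Longrightarrow> YY L t = t"
  by (auto simp: YY_def max_def min_def)
lemma YY_p2: "0 < L \<Longrightarrow> L \<le> 1 \<Longrightarrow> 1-L \<le> t \<Longrightarrow> t \<le> 1-L/2 \<Longrightarrow> YY L t = (t + (1-L))/2"
  by (auto simp: YY_def max_def min_def)
lemma YY_p3: "0 < L \<Longrightarrow> L \<le> 1 \<Longrightarrow> 1-L/2 \<le> t \<Longrightarrow> t \<le> 1-L/4 \<Longrightarrow> YY L t = t - L/4"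
  by (auto simp: YY_def max_def min_def)
lemma YY_p4: "0 < L \<Longrightarrow> L \<le> 1 \<Longrightarrow> 1-L/4 \<le> t \<Longrightarrow> t \<le> 1 \<Longrightarrow> YY L t = 2*t-1"
  by (auto simp: YY_def max_def min_def)

lemma XX_out: "t < 0 \<or> t > 1 \<Longrightarrow> XX L t = t" by (simp add: XX_def)
lemma YY_out: "t < 0 \<or> t > 1 \<Longrightarrow> YY L t = t" by (simp add: YY_def)

lemma XX_YY: assumes "0 < L" "L \<le> 1" shows "XX L (YY L t) = t"
proof -
  consider "t < 0 \<or> t > 1" | "0 \<le> t" "t \<le> 1-L" | "1-L \<le> t" "t \<le> 1-L/2"
    | "1-L/2 \<le> t" "t \<le> 1-L/4" | "1-L/4 \<le> t" "t \<le> 1" by linarith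
  then show ?thesis
  proof cases
    case 1 then show ?thesis by (simp add: XX_out YY_out)
  next
    case 2 then show ?thesis using assms by (simp add: XX_p1 YY_p1)
  next
    case 3
    then have e: "YY L t = (t + (1-L))/2" using assms YY_p2 by blast
    show ?thesis unfolding e using 3 assms by (subst XX_p2) (auto simp: field_simps)
  next
    case 4
    then have e: "YY L t = t - L/4" using assms YY_p3 by blast
    show ?thesis unfolding e using 4 assms by (subst XX_p3) (auto simp: field_simps)
  next
    case 5
    then have e: "YY L t = 2*t-1" using assms YY_p4 by blast
    show ?thesis unfolding e using 5 assms by (subst XX_p4) (auto simp: field_simps)
  qed
qed
lemma YY_XX: assumes "0 < L" "L \<le> 1" shows "YY L (XX L t) = t"
proof -
  consider "t < 0 \<or> t > 1" | "0 \<le> t" "t \<le> 1-L" | "1-L \<le> t" "t \<le> 1-L+L/4"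
    | "1-L+L/4 \<le> t" "t \<le> 1-L/2" | "1-L/2 \<le> t" "t \<le> 1" by linarith
  then show ?thesis
  proof cases
    case 1 then show ?thesis by (simp add: XX_out YY_out)
  next
    case 2 then show ?thesis using assms by (simp add: XX_p1 YY_p1)
  next
    case 3
    then have e: "XX L t = 2*t - (1-L)" using assms XX_p2 by blast
    show ?thesis unfolding e using 3 assms by (subst YY_p2) (auto simp: field_simps)
  next
    case 4
    then have e: "XX L t = t + L/4" using assms XX_p3 by blast
    show ?thesis unfolding e using 4 assms by (subst YY_p3) (auto simp: field_simps)
  next
    case 5
    then have e: "XX L t = (1+t)/2" using assms XX_p4 by blast
    show ?thesis unfolding e using 5 assms by (subst YY_p4) (auto simp: field_simps)
  qed
qed

lemma phiR_XX: "0 < L \<Longrightarrow> L \<le> 1 \<Longrightarrow> phiR (XX L) = XX (L/2)"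
  by (auto simp: fun_eq_iff phiR_def XX_def max_def min_def)

lemma xgen_eq: "xgen k = XX (1/2^k)"
proof (induction k)
  case 0 show ?case by (auto simp: fun_eq_iff x0_def XX_def max_def min_def)
next
  case (Suc k)
  have "phiR (XX (1/2^k)) = XX ((1/2^k)/2)" by (rule phiR_XX) (auto simp: field_simps)
  then show ?case using Suc by (simp add: mult.commute)
qed




fun bc :: "nat \<Rightarrow> nat" where
  "bc n = (if n = 0 then 0 else n mod 2 + bc (n div 2))"
declare bc.simps[simp del]

lemma bc_0[simp]: "bc 0 = 0" by (simp add: bc.simps)
lemma bc_step: "bc n = n mod 2 + bc (n div 2)"
  by (cases "n = 0") (simp, simp add: bc.simps[of n])
lemma bc_2x: "b \<le> 1 \<Longrightarrow> bc (2*x + b) = b + bc x"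
  by (subst bc_step) auto
lemma bc_double[simp]: "bc (2*x) = bc x"
  using bc_2x[of 0 x] by simp
lemma bc_shift: "bc (x * 2^r) = bc x"
proof (induction r)
  case 0 then show ?case by simp
next
  case (Suc r)
  have "x * 2^Suc r = 2 * (x * 2^r)" by simp
  then show ?case using Suc bc_double by metis
qed

lemma bc_concat: "r < 2^k \<Longrightarrow> bc (a * 2^k + r) = bc a + bc r"
proof (induction k arbitrary: a r)
  case 0 then show ?case by simp
next
  case (Suc k)
  have "a * 2^Suc k + r = 2 * (a * 2^k + r div 2) + r mod 2" by simp
  then have "bc (a * 2^Suc k + r) = r mod 2 + bc (a * 2^k + r div 2)"
  proof -
    have "bc (2 * (a * 2^k + r div 2) + r mod 2) = r mod 2 + bc (a * 2^k + r div 2)"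
      by (rule bc_2x) simp
    then show ?thesis using \<open>a * 2^Suc k + r = 2 * (a * 2^k + r div 2) + r mod 2\<close> by metis
  qed
  also have "\<dots> = r mod 2 + bc a + bc (r div 2)" using Suc by simp
  also have "\<dots> = bc a + bc r" using bc_step[of r] by simp
  finally show ?case .
qed

lemma bc_ones: "bc (2^j - 1) = j"
proof (induction j)
  case 0 then show ?case by simp
next
  case (Suc j)
  obtain q where q: "(2::nat)^j = Suc q" using zero_less_power[of "2::nat" j] by (metis gr0_implies_Suc pos2)
  have "(2::nat)^Suc j - 1 = 2 * (2^j - 1) + 1" by (simp add: q)
  then show ?case using bc_2x[of 1 "2^j - 1"] Suc by simp
qed

definition num :: "(nat \<Rightarrow> nat) \<Rightarrow> nat \<Rightarrow> nat" where
  "num a m = (\<Sum>k=1..m. a k * 2^(m-k))"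

lemma num_Suc: "num a (Suc m) = 2 * num a m + a (Suc m)"
proof -
  have "num a (Suc m) = (\<Sum>k=1..m. a k * 2^(Suc m-k)) + a (Suc m)"
    by (simp add: num_def)
  also have "(\<Sum>k=1..m. a k * 2^(Suc m-k)) = (\<Sum>k=1..m. 2 * (a k * 2^(m-k)))"
    by (rule sum.cong) (auto simp: Suc_diff_le)
  finally show ?thesis by (simp add: num_def sum_distrib_left)
qed
lemma num_0[simp]: "num a 0 = 0" by (simp add: num_def)

lemma num_bc: "(\<forall>k. a k \<in> {0,1}) \<Longrightarrow> bc (num a m) = (\<Sum>k=1..m. a k)"
proof (induction m)
  case 0 then show ?case by simp
next
  case (Suc m)
  have "a (Suc m) \<in> {0,1}" using Suc.prems by blast
  then have "a (Suc m) \<le> 1" by auto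
  then show ?case using Suc by (simp add: num_Suc bc_2x)
qed

lemma num_real: "real (num a m) / 2^m = (\<Sum>k=1..m. real (a k) / 2 ^ k)"
  by (induction m) (auto simp: num_Suc field_simps)

lemma num_less: "(\<forall>k. a k \<in> {0,1}) \<Longrightarrow> num a m < 2^m"
proof (induction m)
  case 0 then show ?case by simp
next
  case (Suc m)
  have "a (Suc m) \<in> {0,1}" using Suc.prems by blast
  then have "a (Suc m) \<le> 1" by auto
  with Suc show ?case by (simp add: num_Suc)
qed

lemma num_upd: "num (a(Suc m := b)) m = num a m"
  unfolding num_def by (rule sum.cong) auto

lemma num_exists: "N < 2^m \<Longrightarrow> \<exists>a. (\<forall>k. a k \<in> {0,1}) \<and> num a m = N"
proof (induction m arbitrary: N)
  case 0 then show ?case by (intro exI[of _ "\<lambda>_. 0"]) simp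
next
  case (Suc m)
  then have "N div 2 < 2^m" by simp
  then obtain a where a: "\<forall>k. a k \<in> {0,1}" "num a m = N div 2" using Suc.IH by blast
  let ?a = "a(Suc m := N mod 2)"
  have "\<forall>k. ?a k \<in> {0,1}" using a by auto
  moreover have "num ?a (Suc m) = N" by (simp add: num_Suc num_upd a)
  ultimately show ?case by blast
qed

lemma evenS_iff: assumes "N < 2^m" shows "real N / 2^m \<in> evenS \<longleftrightarrow> even (bc N)"
proof
  assume "real N / 2^m \<in> evenS"
  then obtain m' a where a: "\<forall>k. a k \<in> {0,1}" "real N / 2^m = (\<Sum>k=1..m'. real (a k) / 2 ^ k)"
     "even (\<Sum>k=1..m'. a k)" unfolding evenS_def by blast
  have "real N / 2^m = real (num a m') / 2^m'" using a by (simp add: num_real)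
  then have "real N * 2^m' = real (num a m') * 2^m" by (simp add: field_simps)
  then have "real (N * 2^m') = real (num a m' * 2^m)" by simp
  then have "N * 2^m' = num a m' * 2^m" by (simp only: of_nat_eq_iff)
  then have "bc N = bc (num a m')" by (metis bc_shift)
  then show "even (bc N)" using a num_bc by simp
next
  assume "even (bc N)"
  obtain a where a: "\<forall>k. a k \<in> {0,1}" "num a m = N" using num_exists assms by blast
  show "real N / 2^m \<in> evenS" unfolding evenS_def
    using a num_bc[of a m] num_real[of a m] \<open>even (bc N)\<close> by auto
qed

definition Dy :: "real set" where "Dy = {real N / 2^m | N m. N < 2^m}"

lemma evenS_Dy: "evenS \<subseteq> Dy"
proof
  fix t assume "t \<in> evenS"
  then obtain m a where a: "\<forall>k. a k \<in> {0,1}" "t = (\<Sum>k=1..m. real (a k) / 2 ^ k)"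
    unfolding evenS_def by blast
  then have "t = real (num a m) / 2^m" by (simp add: num_real)
  moreover have "num a m < 2^m" using a num_less by blast
  ultimately show "t \<in> Dy" unfolding Dy_def by blast
qed

lemma Dy_scale: assumes "t \<in> Dy" shows "\<exists>N p. N < 2^(j+p+2) \<and> t = real N / 2^(j+p+2)"
proof -
  obtain N m where Nm: "N < 2^m" "t = real N / 2^m" using assms unfolding Dy_def by blast
  have e: "(2::nat)^(j+m+2) = 2^m * 2^(j+2)" by (simp add: power_add[symmetric])
  have er: "(2::real)^(j+m+2) = 2^m * 2^(j+2)" by (simp add: power_add[symmetric])
  have "N * 2^(j+2) < 2^m * 2^(j+2)" using Nm by simp
  then have "N * 2^(j+2) < 2^(j+m+2)" by (simp only: e)
  moreover have "t = real (N * 2^(j+2)) / 2^(j+m+2)" unfolding er using Nm by simp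
  ultimately show ?thesis by blast
qed

lemma Dy_range: "t \<in> Dy \<Longrightarrow> 0 \<le> t \<and> t < 1"
proof -
  assume "t \<in> Dy"
  then obtain N m where Nm: "N < 2^m" "t = real N / 2^m" unfolding Dy_def by blast
  have "real N < real (2^m)" using Nm by (simp only: of_nat_less_iff)
  then have "real N < 2^m" by simp
  then have "real N / 2^m < 1" by simp
  moreover have "0 \<le> real N / 2^m" by simp
  ultimately show ?thesis using Nm by simp
qed




lemma XX_val:
  fixes D u n :: real assumes D: "1 \<le> D" and u: "0 < u" and n: "0 \<le> n" "n \<le> 4*D*u"
  shows "XX (1/D) (n/(4*D*u)) =
     (if n < 4*D*u - 4*u then 2*n else if n < 4*D*u - 3*u then 2*(2*n - (4*D*u - 4*u))
      else if n < 4*D*u - 2*u then 2*(n+u) else 4*D*u + n) / (8*D*u)"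
proof -
  have L: "0 < 1/D" "1/D \<le> 1" using D by auto
  have Dp: "0 < D" using D by simp
  have t0: "0 \<le> n/(4*D*u)" using n Dp u by simp
  have t1: "n/(4*D*u) \<le> 1" using n Dp u by (simp add: divide_simps)
  have eq: "\<And>a b. a/(4*D*u) \<le> 1 - (1/D) + b/(4*D*u) \<longleftrightarrow> a \<le> 4*D*u - 4*u + b"
    using Dp u by (simp add: divide_simps) (simp add: algebra_simps)
  have eq2: "\<And>a b. 1 - (1/D) + b/(4*D*u) \<le> a/(4*D*u) \<longleftrightarrow> 4*D*u - 4*u + b \<le> a"
    using Dp u by (simp add: divide_simps) (simp add: algebra_simps)
  consider "n < 4*D*u - 4*u" | "\<not> n < 4*D*u - 4*u" "n < 4*D*u - 3*u"
    | "\<not> n < 4*D*u - 3*u" "n < 4*D*u - 2*u" | "\<not> n < 4*D*u - 2*u" by linarith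
  then show ?thesis
  proof cases
    case 1
    have "n/(4*D*u) \<le> 1 - 1/D" using eq[of n 0] 1 by simp
    then have "XX (1/D) (n/(4*D*u)) = n/(4*D*u)" using XX_p1[OF L t0] by blast
    then show ?thesis using 1 Dp u by (simp add: divide_simps)
  next
    case 2
    have a: "1 - 1/D \<le> n/(4*D*u)" using eq2[of 0 n] 2 by simp
    have b: "n/(4*D*u) \<le> 1 - 1/D + 1/D/4" using eq[of n u] 2 Dp u by (simp add: field_simps)
    have "XX (1/D) (n/(4*D*u)) = 2*(n/(4*D*u)) - (1 - 1/D)" using XX_p2[OF L a b] by blast
    then show ?thesis using 2 Dp u by (simp add: divide_simps) (simp add: algebra_simps)
  next
    case 3
    have e: "1/D/4 = u/(4*D*u)" using u Dp by (simp add: field_simps)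
    have a: "1 - 1/D + 1/D/4 \<le> n/(4*D*u)" unfolding e using eq2[of u n] 3 by simp
    have b: "n/(4*D*u) \<le> 1 - 1/D/2" using eq[of n "2*u"] 3 Dp u by (simp add: field_simps)
    have "XX (1/D) (n/(4*D*u)) = n/(4*D*u) + 1/D/4" using XX_p3[OF L a b] by blast
    then show ?thesis using 3 Dp u by (simp add: divide_simps) (simp add: algebra_simps)
  next
    case 4
    have e: "1/D/2 = (2*u)/(4*D*u)" using u Dp by (simp add: field_simps)
    have a0: "1 - 1/D + (2*u)/(4*D*u) \<le> n/(4*D*u)" using eq2[of "2*u" n] 4 by simp
    have a: "1 - 1/D/2 \<le> n/(4*D*u)" using a0 e by simp
    have "XX (1/D) (n/(4*D*u)) = (1 + n/(4*D*u))/2" using XX_p4[OF L a t1] by blast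
    then show ?thesis using 4 Dp u by (simp add: divide_simps)
  qed
qed

lemma YY_val:
  fixes D u n :: real assumes D: "1 \<le> D" and u: "0 < u" and n: "0 \<le> n" "n \<le> 4*D*u"
  shows "YY (1/D) (n/(4*D*u)) =
     (if n < 4*D*u - 4*u then 2*n else if n < 4*D*u - 2*u then n + (4*D*u - 4*u)
      else if n < 4*D*u - u then 2*(n-u) else 2*(2*n - 4*D*u)) / (8*D*u)"
proof -
  have L: "0 < 1/D" "1/D \<le> 1" using D by auto
  have Dp: "0 < D" using D by simp
  have t0: "0 \<le> n/(4*D*u)" using n Dp u by simp
  have t1: "n/(4*D*u) \<le> 1" using n Dp u by (simp add: divide_simps)
  have eq: "\<And>a b. a/(4*D*u) \<le> 1 - (1/D) + b/(4*D*u) \<longleftrightarrow> a \<le> 4*D*u - 4*u + b"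
    using Dp u by (simp add: divide_simps) (simp add: algebra_simps)
  have eq2: "\<And>a b. 1 - (1/D) + b/(4*D*u) \<le> a/(4*D*u) \<longleftrightarrow> 4*D*u - 4*u + b \<le> a"
    using Dp u by (simp add: divide_simps) (simp add: algebra_simps)
  have e2: "1/D/2 = (2*u)/(4*D*u)" using u Dp by (simp add: field_simps)
  have e1: "1/D/4 = u/(4*D*u)" using u Dp by (simp add: field_simps)
  have e3: "1 - 1/D/4 = 1 - 1/D + (3*u)/(4*D*u)" using u Dp by (simp add: field_simps)
  have e4: "1 - 1/D/2 = 1 - 1/D + (2*u)/(4*D*u)" using u Dp by (simp add: field_simps)
  consider "n < 4*D*u - 4*u" | "\<not> n < 4*D*u - 4*u" "n < 4*D*u - 2*u"
    | "\<not> n < 4*D*u - 2*u" "n < 4*D*u - u" | "\<not> n < 4*D*u - u" by linarith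
  then show ?thesis
  proof cases
    case 1
    have "n/(4*D*u) \<le> 1 - 1/D" using eq[of n 0] 1 by simp
    then have "YY (1/D) (n/(4*D*u)) = n/(4*D*u)" using YY_p1[OF L t0] by blast
    then show ?thesis using 1 Dp u by (simp add: divide_simps)
  next
    case 2
    have a: "1 - 1/D \<le> n/(4*D*u)" using eq2[of 0 n] 2 by simp
    have b: "n/(4*D*u) \<le> 1 - 1/D/2" unfolding e4 using eq[of n "2*u"] 2 by simp
    have "YY (1/D) (n/(4*D*u)) = (n/(4*D*u) + (1 - 1/D))/2" using YY_p2[OF L a b] by blast
    then show ?thesis using 2 Dp u by (simp add: divide_simps) (simp add: algebra_simps)
  next
    case 3
    have a: "1 - 1/D/2 \<le> n/(4*D*u)" unfolding e4 using eq2[of "2*u" n] 3 by simp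
    have b: "n/(4*D*u) \<le> 1 - 1/D/4" unfolding e3 using eq[of n "3*u"] 3 by simp
    have "YY (1/D) (n/(4*D*u)) = n/(4*D*u) - 1/D/4" using YY_p3[OF L a b] by blast
    then show ?thesis using 3 Dp u by (simp add: divide_simps) (simp add: algebra_simps)
  next
    case 4
    have a: "1 - 1/D/4 \<le> n/(4*D*u)" unfolding e3 using eq2[of "3*u" n] 4 by simp
    have "YY (1/D) (n/(4*D*u)) = 2*(n/(4*D*u)) - 1" using YY_p4[OF L a t1] by blast
    then show ?thesis using 4 Dp u by (simp add: divide_simps)
  qed
qed




lemma bc_1[simp]: "bc 1 = 1" using bc_step[of 1] by simp
lemma bc_Suc0[simp]: "bc (Suc 0) = Suc 0" using bc_1 by simp
lemma bc_3: "bc 3 = 2" using bc_step[of 3] bc_step[of 1] by simp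

lemma bc_2D: "bc (2*2^j - 1) = j+1"
  using bc_ones[of "Suc j"] by simp

lemma Gx: assumes N: "N < 2^(j+p+2)"
  shows "\<exists>N'. N' < 2^(j+p+3) \<and> XX (1/2^j) (real N/2^(j+p+2)) = real N'/2^(j+p+3) \<and>
     (even (bc N') \<longleftrightarrow> (even (bc N) \<longleftrightarrow> real N/2^(j+p+2) < 1 - 1/2^(j+1)))"
proof -
  define D where "D = (2::nat)^j"
  define u where "u = (2::nat)^p"
  have D1: "1 \<le> D" by (simp add: D_def)
  have u0: "0 < u" by (simp add: u_def)
  have p2: "(2::nat)^(j+p+2) = 4*D*u" by (simp add: D_def u_def power_add)
  have p3: "(2::nat)^(j+p+3) = 8*D*u" by (simp add: D_def u_def power_add)
  have rp2: "(2::real)^(j+p+2) = 4*real D*real u" by (simp add: D_def u_def power_add)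
  have rp3: "(2::real)^(j+p+3) = 8*real D*real u" by (simp add: D_def u_def power_add)
  have rj: "(2::real)^j = real D" by (simp add: D_def)
  have rj1: "(2::real)^(j+1) = 2*real D" by (simp add: D_def)
  have u4: "(2::nat)^(p+2) = 4*u" by (simp add: u_def)
  have u2: "(2::nat)^(p+1) = 2*u" by (simp add: u_def)
  define C where "C = (D-1)*4*u"
  have CD: "4*D*u = C + 4*u" using D1 unfolding C_def
    by (metis Suc_diff_1 add.commute less_le_trans mult.assoc mult_Suc mult.commute zero_less_one)
  have Cr: "real C = 4*real D*real u - 4*real u"
    using arg_cong[OF CD, of real] by simp
  have Nb: "N < C + 4*u" using N p2 CD by simp
  have bcC: "x < 4*u \<Longrightarrow> bc (C + x) = j + bc x" for x
    using bc_concat[of x "p+2" "D-1"] u4 bc_ones[of j] unfolding C_def D_def by (simp add: mult.assoc)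
  have bcu: "x < u \<Longrightarrow> bc (u + x) = 1 + bc x" for x
    using bc_concat[of x p 1] by (simp add: u_def)
  have bc2u: "x < 2*u \<Longrightarrow> bc (2*u + x) = 1 + bc x" for x
    using bc_concat[of x "p+1" 1] u2 by simp
  have val: "XX (1/2^j) (real N/2^(j+p+2)) =
     (if real N < 4*real D*real u - 4*real u then 2*real N
      else if real N < 4*real D*real u - 3*real u then 2*(2*real N - (4*real D*real u - 4*real u))
      else if real N < 4*real D*real u - 2*real u then 2*(real N+real u) else 4*real D*real u + real N) / (8*real D*real u)"
  proof -
    have "N \<le> 4*D*u" using N p2 by simp
    then have "real N \<le> real (4*D*u)" by (simp only: of_nat_le_iff)
    then have "real N \<le> 4*real D*real u" by simp
    then show ?thesis unfolding rp2 rj using XX_val[of "real D" "real u" "real N"] D1 u0 by simp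
  qed
  have thr: "real N/2^(j+p+2) < 1 - 1/2^(j+1) \<longleftrightarrow> N < C + 2*u"
  proof -
    have "real N/2^(j+p+2) < 1 - 1/2^(j+1) \<longleftrightarrow> real N < 4*real D*real u - 2*real u"
      unfolding rp2 rj1 using D1 u0 by (simp add: divide_simps) (simp add: algebra_simps)
    also have "\<dots> \<longleftrightarrow> real N < real (C + 2*u)" using Cr by simp
    finally show ?thesis by (simp only: of_nat_less_iff)
  qed
  have r1: "real N < real C \<longleftrightarrow> N < C"
    by (simp only: of_nat_less_iff)
  note val' = val[unfolded Cr[symmetric]]
  have r2: "real N < 4*real D*real u - 3*real u \<longleftrightarrow> N < C + u"
  proof -
    have "4*real D*real u - 3*real u = real (C + u)" using Cr by simp
    then show ?thesis by (simp only: of_nat_less_iff)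
  qed
  have r3: "real N < 4*real D*real u - 2*real u \<longleftrightarrow> N < C + 2*u"
  proof -
    have "4*real D*real u - 2*real u = real (C + 2*u)" using Cr by simp
    then show ?thesis by (simp only: of_nat_less_iff)
  qed
  consider "N < C" | "C \<le> N" "N < C + u" | "C + u \<le> N" "N < C + 2*u" | "C + 2*u \<le> N" by linarith
  then show ?thesis
  proof cases
    case 1
    have "XX (1/2^j) (real N/2^(j+p+2)) = real (2*N)/2^(j+p+3)" using val' r1 1 rp3 by simp
    moreover have "2*N < 2^(j+p+3)" using N p2 p3 by simp
    ultimately show ?thesis using thr 1 by (intro exI[of _ "2*N"]) auto
  next
    case 2
    define r where "r = N - C"
    have r: "N = C + r" "r < u" using 2 unfolding r_def by auto
    define N' where "N' = 2*(C + 2*r)"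
    have "XX (1/2^j) (real N/2^(j+p+2)) = 2*(2*real N - real C)/(8*real D*real u)"
      using val' r1 r2 2 by simp
    moreover have "real N' = 2*(2*real N - real C)" using r by (simp add: N'_def)
    ultimately have "XX (1/2^j) (real N/2^(j+p+2)) = real N'/2^(j+p+3)" using rp3 by simp
    moreover have "N' < 2^(j+p+3)" using r p3 CD by (simp add: N'_def)
    moreover have "bc N' = bc N" unfolding N'_def bc_double using r bcC[of "2*r"] bcC[of r] by simp
    ultimately show ?thesis using thr 2 by (intro exI[of _ N']) auto
  next
    case 3
    define r where "r = N - C - u"
    have r: "N = C + u + r" "r < u" using 3 unfolding r_def by auto
    define N' where "N' = 2*(C + (2*u + r))"
    have "XX (1/2^j) (real N/2^(j+p+2)) = 2*(real N + real u)/(8*real D*real u)"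
      using val' r1 r2 r3 3 by simp
    moreover have "real N' = 2*(real N + real u)" using r by (simp add: N'_def)
    ultimately have "XX (1/2^j) (real N/2^(j+p+2)) = real N'/2^(j+p+3)" using rp3 by simp
    moreover have "N' < 2^(j+p+3)" using r p3 CD by (simp add: N'_def)
    moreover have "bc N' = bc N" unfolding N'_def bc_double using r bcC[of "2*u+r"] bcC[of "u+r"] bcu[of r] bc2u[of r]
      by (simp add: add.assoc)
    ultimately show ?thesis using thr 3 by (intro exI[of _ N']) auto
  next
    case 4
    define r where "r = N - C - 2*u"
    have r: "N = C + (2*u + r)" "r < 2*u" using 4 Nb unfolding r_def by auto
    define N' where "N' = (2*D - 1) * 2^(p+2) + (2*u + r)"
    have e: "N' = 4*D*u + N"
    proof -
      have "(2*D - 1) * 2^(p+2) = 4*D*u + C" using D1 unfolding u4 C_def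
        by (simp add: algebra_simps diff_mult_distrib)
      then show ?thesis using r by (simp add: N'_def)
    qed
    have "XX (1/2^j) (real N/2^(j+p+2)) = (4*real D*real u + real N)/(8*real D*real u)"
      using val' r1 r2 r3 4 by simp
    moreover have "real N' = 4*real D*real u + real N" using e by simp
    ultimately have "XX (1/2^j) (real N/2^(j+p+2)) = real N'/2^(j+p+3)" using rp3 by simp
    moreover have "N' < 2^(j+p+3)" using e p3 Nb CD by simp
    moreover have "bc N' = j + 2 + bc r" unfolding N'_def using bc_concat[of "2*u+r" "p+2" "2*D-1"] bc2u[of r] r u4
      bc_2D[of j] by (simp add: D_def)
    moreover have "bc N = j + 1 + bc r" using r bcC[of "2*u+r"] bc2u[of r] by simp
    ultimately show ?thesis using thr 4 by (intro exI[of _ N']) auto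
  qed
qed


lemma Gy: assumes N: "N < 2^(j+p+2)"
  shows "\<exists>N'. N' < 2^(j+p+3) \<and> YY (1/2^j) (real N/2^(j+p+2)) = real N'/2^(j+p+3) \<and>
     (even (bc N') \<longleftrightarrow> (even (bc N) \<longleftrightarrow> real N/2^(j+p+2) < 1 - 1/2^(j+2)))"
proof -
  define D where "D = (2::nat)^j"
  define u where "u = (2::nat)^p"
  have D1: "1 \<le> D" by (simp add: D_def)
  have u0: "0 < u" by (simp add: u_def)
  have p2: "(2::nat)^(j+p+2) = 4*D*u" by (simp add: D_def u_def power_add)
  have p3: "(2::nat)^(j+p+3) = 8*D*u" by (simp add: D_def u_def power_add)
  have rp2: "(2::real)^(j+p+2) = 4*real D*real u" by (simp add: D_def u_def power_add)
  have rp3: "(2::real)^(j+p+3) = 8*real D*real u" by (simp add: D_def u_def power_add)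
  have rj: "(2::real)^j = real D" by (simp add: D_def)
  have rj1: "(2::real)^(j+2) = 4*real D" by (simp add: D_def)
  have u4: "(2::nat)^(p+2) = 4*u" by (simp add: u_def)
  have u2: "(2::nat)^(p+1) = 2*u" by (simp add: u_def)
  define C where "C = (D-1)*4*u"
  have CD: "4*D*u = C + 4*u" using D1 unfolding C_def
    by (metis Suc_diff_1 add.commute less_le_trans mult.assoc mult_Suc mult.commute zero_less_one)
  have Cr: "real C = 4*real D*real u - 4*real u"
    using arg_cong[OF CD, of real] by simp
  have Nb: "N < C + 4*u" using N p2 CD by simp
  have bcC: "x < 4*u \<Longrightarrow> bc (C + x) = j + bc x" for x
    using bc_concat[of x "p+2" "D-1"] u4 bc_ones[of j] unfolding C_def D_def by (simp add: mult.assoc)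
  have bcu: "x < u \<Longrightarrow> bc (u + x) = 1 + bc x" for x
    using bc_concat[of x p 1] by (simp add: u_def)
  have bc2u: "x < 2*u \<Longrightarrow> bc (2*u + x) = 1 + bc x" for x
    using bc_concat[of x "p+1" 1] u2 by simp
  have val: "YY (1/2^j) (real N/2^(j+p+2)) =
     (if real N < 4*real D*real u - 4*real u then 2*real N
      else if real N < 4*real D*real u - 2*real u then real N + (4*real D*real u - 4*real u)
      else if real N < 4*real D*real u - real u then 2*(real N - real u) else 2*(2*real N - 4*real D*real u)) / (8*real D*real u)"
  proof -
    have "N \<le> 4*D*u" using N p2 by simp
    then have "real N \<le> real (4*D*u)" by (simp only: of_nat_le_iff)
    then have "real N \<le> 4*real D*real u" by simp
    then show ?thesis unfolding rp2 rj using YY_val[of "real D" "real u" "real N"] D1 u0 by simp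
  qed
  have thr: "real N/2^(j+p+2) < 1 - 1/2^(j+2) \<longleftrightarrow> N < C + 3*u"
  proof -
    have "real N/2^(j+p+2) < 1 - 1/2^(j+2) \<longleftrightarrow> real N < 4*real D*real u - real u"
      unfolding rp2 rj1 using D1 u0 by (simp add: divide_simps) (simp add: algebra_simps)
    also have "\<dots> \<longleftrightarrow> real N < real (C + 3*u)" using Cr by simp
    finally show ?thesis by (simp only: of_nat_less_iff)
  qed
  have r1: "real N < real C \<longleftrightarrow> N < C"
    by (simp only: of_nat_less_iff)
  note val' = val[unfolded Cr[symmetric]]
  have r2: "real N < 4*real D*real u - 2*real u \<longleftrightarrow> N < C + 2*u"
  proof -
    have "4*real D*real u - 2*real u = real (C + 2*u)" using Cr by simp
    then show ?thesis by (simp only: of_nat_less_iff)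
  qed
  have r3: "real N < 4*real D*real u - real u \<longleftrightarrow> N < C + 3*u"
  proof -
    have "4*real D*real u - real u = real (C + 3*u)" using Cr by simp
    then show ?thesis by (simp only: of_nat_less_iff)
  qed
  have u8: "(2::nat)^(p+3) = 8*u" by (simp add: u_def power_add)
  have bc3u: "x < u \<Longrightarrow> bc (3*u + x) = 2 + bc x" for x
    using bc_concat[of x p 3] bc_3 by (simp add: u_def)
  consider "N < C" | "C \<le> N" "N < C + 2*u" | "C + 2*u \<le> N" "N < C + 3*u" | "C + 3*u \<le> N" by linarith
  then show ?thesis
  proof cases
    case 1
    have "YY (1/2^j) (real N/2^(j+p+2)) = real (2*N)/2^(j+p+3)" using val' r1 1 rp3 by simp
    moreover have "2*N < 2^(j+p+3)" using N p2 p3 by simp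
    ultimately show ?thesis using thr 1 by (intro exI[of _ "2*N"]) auto
  next
    case 2
    define r where "r = N - C"
    have r: "N = C + r" "r < 2*u" using 2 unfolding r_def by auto
    define N' where "N' = (D-1)*2^(p+3) + r"
    have eN: "N' = 2*C + r" unfolding N'_def C_def u8 by simp
    have "YY (1/2^j) (real N/2^(j+p+2)) = (real N + real C)/(8*real D*real u)"
      using val' r1 r2 2 by simp
    moreover have "real N' = real N + real C" using r eN by simp
    ultimately have "YY (1/2^j) (real N/2^(j+p+2)) = real N'/2^(j+p+3)" using rp3 by simp
    moreover have "N' < 2^(j+p+3)" using r p3 CD eN by simp
    moreover have "bc N' = bc N" unfolding N'_def using r bcC[of r] bc_concat[of r "p+3" "D-1"] u8 bc_ones[of j]
      by (simp add: D_def)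
    ultimately show ?thesis using thr 2 by (intro exI[of _ N']) auto
  next
    case 3
    define r where "r = N - C - 2*u"
    have r: "N = C + (2*u + r)" "r < u" using 3 unfolding r_def by auto
    define N' where "N' = 2*(C + (u + r))"
    have "YY (1/2^j) (real N/2^(j+p+2)) = 2*(real N - real u)/(8*real D*real u)"
      using val' r1 r2 r3 3 by simp
    moreover have "real N' = 2*(real N - real u)" using r by (simp add: N'_def)
    ultimately have "YY (1/2^j) (real N/2^(j+p+2)) = real N'/2^(j+p+3)" using rp3 by simp
    moreover have "N' < 2^(j+p+3)" using r p3 CD by (simp add: N'_def)
    moreover have "bc N' = bc N" unfolding N'_def bc_double using r bcC[of "2*u+r"] bcC[of "u+r"] bcu[of r] bc2u[of r]
      by simp
    ultimately show ?thesis using thr 3 by (intro exI[of _ N']) auto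
  next
    case 4
    define r where "r = N - C - 3*u"
    have r: "N = C + (3*u + r)" "r < u" using 4 Nb unfolding r_def by auto
    define N' where "N' = 2*(C + (2*u + 2*r))"
    have "YY (1/2^j) (real N/2^(j+p+2)) = 2*(2*real N - 4*real D*real u)/(8*real D*real u)"
      using val' r1 r2 r3 4 by simp
    moreover have "real N' = 2*(2*real N - 4*real D*real u)" using r Cr by (simp add: N'_def algebra_simps)
    ultimately have "YY (1/2^j) (real N/2^(j+p+2)) = real N'/2^(j+p+3)" using rp3 by simp
    moreover have "N' < 2^(j+p+3)" using r p3 CD by (simp add: N'_def)
    moreover have "bc N' = j + 1 + bc r" unfolding N'_def bc_double using r bcC[of "2*u+2*r"] bc2u[of "2*r"] by simp
    moreover have "bc N = j + 2 + bc r" using r bcC[of "3*u+r"] bc3u[of r] by simp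
    ultimately show ?thesis using thr 4 by (intro exI[of _ N']) auto
  qed
qed




definition gen :: "bool \<Rightarrow> nat \<Rightarrow> real \<Rightarrow> real" where
  "gen e j = (if e then XX (1/2^j) else YY (1/2^j))"
definition th :: "nat \<Rightarrow> real" where "th r = 1 - 1/2^r"
definition tau :: "bool \<Rightarrow> nat \<Rightarrow> real" where "tau e j = th (j + 1 + (if e then 0 else 1))"
definition sig :: "bool \<Rightarrow> nat \<Rightarrow> real" where "sig e j = th (j + 1 + (if e then 1 else 0))"

lemma L_facts: "0 < (1::real)/2^j" "(1::real)/2^j \<le> 1" by auto

lemma gen_inv: "gen (\<not>e) j (gen e j t) = t"
  using XX_YY[OF L_facts] YY_XX[OF L_facts] by (simp add: gen_def)

lemma gen_out: "t < 0 \<or> t > 1 \<Longrightarrow> gen e j t = t"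
  by (simp add: gen_def XX_out YY_out)

lemma XX_mono: assumes "0 \<le> s" "s \<le> t" "t \<le> 1" shows "XX L s \<le> XX L t"
proof -
  have "\<not> (s < 0 \<or> s > 1)" "\<not> (t < 0 \<or> t > 1)" using assms by auto
  then have e: "XX L s = max s (min (2*s - (1-L)) (min (s + L/4) ((1+s)/2)))"
    "XX L t = max t (min (2*t - (1-L)) (min (t + L/4) ((1+t)/2)))" unfolding XX_def by simp_all
  show ?thesis unfolding e by (intro max.mono min.mono) (use assms in simp_all)
qed
lemma YY_mono: assumes "0 \<le> s" "s \<le> t" "t \<le> 1" shows "YY L s \<le> YY L t"
proof -
  have "\<not> (s < 0 \<or> s > 1)" "\<not> (t < 0 \<or> t > 1)" using assms by auto
  then have e: "YY L s = min s (max ((s + (1-L))/2) (max (s - L/4) (2*s-1)))"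
    "YY L t = min t (max ((t + (1-L))/2) (max (t - L/4) (2*t-1)))" unfolding YY_def by simp_all
  show ?thesis unfolding e by (intro max.mono min.mono) (use assms in simp_all)
qed
lemma XX_0: "0 < L \<Longrightarrow> L \<le> 1 \<Longrightarrow> XX L 0 = 0" by (simp add: XX_def max_def min_def)
lemma XX_1: "0 < L \<Longrightarrow> L \<le> 1 \<Longrightarrow> XX L 1 = 1" by (simp add: XX_def max_def min_def)
lemma YY_0: "0 < L \<Longrightarrow> L \<le> 1 \<Longrightarrow> YY L 0 = 0" by (simp add: YY_def max_def min_def)
lemma YY_1: "0 < L \<Longrightarrow> L \<le> 1 \<Longrightarrow> YY L 1 = 1" by (simp add: YY_def max_def min_def)

lemma gen_mono: "0 \<le> s \<Longrightarrow> s \<le> t \<Longrightarrow> t \<le> 1 \<Longrightarrow> gen e j s \<le> gen e j t"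
  by (simp add: gen_def XX_mono YY_mono)

lemma gen_01: "0 \<le> t \<Longrightarrow> t \<le> 1 \<Longrightarrow> 0 \<le> gen e j t \<and> gen e j t \<le> 1"
proof -
  assume t: "0 \<le> t" "t \<le> 1"
  have "gen e j 0 = 0" "gen e j 1 = 1" using L_facts[of j]
    by (auto simp: gen_def XX_0 XX_1 YY_0 YY_1)
  then show ?thesis using gen_mono[of 0 t e j] gen_mono[of t 1 e j] t by simp
qed

lemma gen_strict: assumes "0 \<le> s" "s < t" "t \<le> 1" shows "gen e j s < gen e j t"
proof -
  have "gen e j s \<le> gen e j t" using assms gen_mono by simp
  moreover have "gen e j s \<noteq> gen e j t"
  proof
    assume "gen e j s = gen e j t"
    then have "gen (\<not>e) j (gen e j s) = gen (\<not>e) j (gen e j t)" by simp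
    then show False using gen_inv[of e j s] gen_inv[of e j t] assms by simp
  qed
  ultimately show ?thesis by simp
qed

lemma gen_less_iff: "0 \<le> s \<Longrightarrow> s \<le> 1 \<Longrightarrow> 0 \<le> t \<Longrightarrow> t \<le> 1 \<Longrightarrow> gen e j s < gen e j t \<longleftrightarrow> s < t"
  by (metis gen_strict linorder_not_le order_less_le gen_mono)

lemma th_Dy: "th r \<in> Dy"
proof -
  have "th r = real (2^r - 1) / 2^r" unfolding th_def by (simp add: of_nat_diff field_simps)
  moreover have "(2::nat)^r - 1 < 2^r" by simp
  ultimately show ?thesis unfolding Dy_def by blast
qed

lemma th_inj: "th a = th b \<longleftrightarrow> a = b"
  unfolding th_def by simp

lemma th_1: "th (j+1) = 1 - (1/2^j)/2" by (simp add: th_def)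
lemma th_2: "th (j+2) = 1 - (1/2^j)/4" by (simp add: th_def power_add)

lemma gen_tau: "gen e j (tau e j) = sig e j"
proof (cases e)
  case True
  have "XX (1/2^j) (1 - (1/2^j)/2) = (1 + (1 - (1/2^j)/2))/2"
    by (rule XX_p4[OF L_facts]) (auto simp: field_simps)
  also have "\<dots> = 1 - (1/2^j)/4" by (simp add: field_simps)
  finally show ?thesis using True th_1[of j] th_2[of j] by (simp add: gen_def tau_def sig_def)
next
  case False
  have "YY (1/2^j) (1 - (1/2^j)/4) = (1 - (1/2^j)/4) - (1/2^j)/4"
    by (rule YY_p3[OF L_facts]) (auto simp: field_simps)
  also have "\<dots> = 1 - (1/2^j)/2" by (simp add: field_simps)
  finally show ?thesis using False th_1[of j] th_2[of j] by (simp add: gen_def tau_def sig_def)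
qed

lemma gen_Dy: assumes "t \<in> Dy"
  shows "gen e j t \<in> Dy \<and> (gen e j t \<in> evenS \<longleftrightarrow> (t \<in> evenS \<longleftrightarrow> t < tau e j))"
proof -
  obtain N p where N: "N < 2^(j+p+2)" "t = real N / 2^(j+p+2)" using Dy_scale[OF assms] by blast
  obtain N' where N': "N' < 2^(j+p+3)" "gen e j t = real N'/2^(j+p+3)"
     "even (bc N') \<longleftrightarrow> (even (bc N) \<longleftrightarrow> t < tau e j)"
  proof (cases e)
    case True
    then show ?thesis using Gx[OF N(1)] that N(2) by (auto simp: gen_def tau_def th_def)
  next
    case False
    then show ?thesis using Gy[OF N(1)] that N(2) by (auto simp: gen_def tau_def th_def)
  qed
  have "gen e j t \<in> Dy" using N' unfolding Dy_def by blast
  moreover have "gen e j t \<in> evenS \<longleftrightarrow> even (bc N')" unfolding N'(2) by (rule evenS_iff[OF N'(1)])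
  moreover have "t \<in> evenS \<longleftrightarrow> even (bc N)" unfolding N(2) by (rule evenS_iff[OF N(1)])
  ultimately show ?thesis using N' by simp
qed




lemma gen_inv': "gen e j (gen (\<not>e) j t) = t"
  using gen_inv[of "\<not>e" j t] by simp

lemma Dy_01: "t \<in> Dy \<Longrightarrow> 0 \<le> t \<and> t \<le> 1" using Dy_range by force

lemma comp_orient:
  "(gen d k \<circ> gen e j) ` evenS = evenS \<longleftrightarrow> sig e j = tau d k"
proof -
  define f where "f = gen e j"
  define g where "g = gen d k"
  define f' where "f' = gen (\<not>e) j"
  define g' where "g' = gen (\<not>d) k"
  define q where "q = f' (tau d k)"
  have qDy: "q \<in> Dy" unfolding q_def f'_def tau_def using gen_Dy th_Dy by blast
  have fq: "f q = tau d k" unfolding q_def f_def f'_def by (rule gen_inv')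
  have key: "t \<in> Dy \<Longrightarrow> (g (f t) \<in> evenS \<longleftrightarrow> ((t \<in> evenS \<longleftrightarrow> t < tau e j) \<longleftrightarrow> t < q))" for t
  proof -
    assume t: "t \<in> Dy"
    have ft: "f t \<in> Dy" "f t \<in> evenS \<longleftrightarrow> (t \<in> evenS \<longleftrightarrow> t < tau e j)"
      using gen_Dy[OF t] unfolding f_def by blast+
    have "g (f t) \<in> evenS \<longleftrightarrow> (f t \<in> evenS \<longleftrightarrow> f t < tau d k)"
      using gen_Dy[OF ft(1)] unfolding g_def by blast
    moreover have "f t < tau d k \<longleftrightarrow> t < q" unfolding fq[symmetric] f_def
      using gen_less_iff Dy_01[OF t] Dy_01[OF qDy] by blast
    ultimately show ?thesis using ft by simp
  qed
  have hDy: "t \<in> Dy \<Longrightarrow> g (f t) \<in> Dy" for t unfolding f_def g_def using gen_Dy by blast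
  have hinj: "g (f s) = g (f t) \<Longrightarrow> s = t" for s t
  proof -
    assume "g (f s) = g (f t)"
    then have "f' (g' (g (f s))) = f' (g' (g (f t)))" by simp
    then show "s = t" unfolding f_def g_def f'_def g'_def by (simp add: gen_inv)
  qed
  show ?thesis
  proof
    assume pos: "sig e j = tau d k"
    have qp: "q = tau e j" unfolding q_def f'_def pos[symmetric] gen_tau[symmetric] by (rule gen_inv)
    have pres: "t \<in> Dy \<Longrightarrow> g (f t) \<in> evenS \<longleftrightarrow> t \<in> evenS" for t using key[of t] qp by auto
    show "(gen d k \<circ> gen e j) ` evenS = evenS"
    proof
      show "(gen d k \<circ> gen e j) ` evenS \<subseteq> evenS" using pres evenS_Dy unfolding f_def g_def by auto
    next
      show "evenS \<subseteq> (gen d k \<circ> gen e j) ` evenS"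
      proof
        fix s assume s: "s \<in> evenS"
        define t where "t = f' (g' s)"
        have tDy: "t \<in> Dy" unfolding t_def f'_def g'_def using gen_Dy s evenS_Dy by blast
        have ht: "g (f t) = s" unfolding t_def f_def g_def f'_def g'_def by (simp add: gen_inv')
        then have "t \<in> evenS" using pres[OF tDy] s by simp
        then show "s \<in> (gen d k \<circ> gen e j) ` evenS" using ht unfolding f_def g_def by force
      qed
    qed
  next
    assume eq: "(gen d k \<circ> gen e j) ` evenS = evenS"
    show "sig e j = tau d k"
    proof (rule ccontr)
      assume ne: "sig e j \<noteq> tau d k"
      have qp: "q \<noteq> tau e j" using fq ne gen_tau unfolding f_def by metis
      define t0 where "t0 = min q (tau e j)"
      have t0Dy: "t0 \<in> Dy" unfolding t0_def using qDy th_Dy[of "j + 1 + (if e then 0 else 1)"]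
        by (simp add: min_def tau_def)
      have flip: "g (f t0) \<in> evenS \<longleftrightarrow> t0 \<notin> evenS"
        using key[OF t0Dy] qp unfolding t0_def by (auto simp: min_def)
      show False
      proof (cases "t0 \<in> evenS")
        case True
        then have "g (f t0) \<in> evenS" using eq unfolding f_def g_def by force
        then show False using flip True by simp
      next
        case False
        then have "g (f t0) \<in> (gen d k \<circ> gen e j) ` evenS" using flip eq by simp
        then obtain s where "s \<in> evenS" "g (f t0) = g (f s)" unfolding f_def g_def by auto
        then show False using hinj False by metis
      qed
    qed
  qed
qed




lemma all3: "(\<forall>i<(3::nat). P i) \<longleftrightarrow> P 0 \<and> P 1 \<and> P 2"
  by (auto simp: eval_nat_numeral less_Suc_eq)
lemma all4: "(\<forall>i<(4::nat). P i) \<longleftrightarrow> P 0 \<and> P 1 \<and> P 2 \<and> P 3"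
  by (auto simp: eval_nat_numeral less_Suc_eq)
lemma pw: "(2::real) powr (real_of_int 0) = 1" "(2::real) powr (real_of_int 1) = 2"
  "(2::real) powr (real_of_int 2) = 4" "(2::real) powr (real_of_int (-1)) = 1/2"
  "(2::real) powr (real_of_int (-2)) = 1/4"
  by (simp_all add: powr_minus powr_numeral)

lemma dyadic_1m: "dyadic (1 - real a / 2^m)"
  unfolding dyadic_def
  by (rule exI[of _ "2^m - int a"], rule exI[of _ m]) (simp add: field_simps)
lemma dyadic_0: "dyadic 0" unfolding dyadic_def by (rule exI[of _ 0], rule exI[of _ 0]) simp
lemma dyadic_1: "dyadic 1" unfolding dyadic_def by (rule exI[of _ 1], rule exI[of _ 0]) simp

lemma continuous_XX: "continuous_on {0..1} (XX L)"
proof -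
  have "continuous_on {0..1} (\<lambda>t. max t (min (2*t - (1-L)) (min (t + L/4) ((1+t)/2))))"
    by (intro continuous_on_max continuous_on_min continuous_intros) auto
  then show ?thesis by (rule continuous_on_cong[THEN iffD1, rotated 2]) (auto simp: XX_def)
qed
lemma continuous_YY: "continuous_on {0..1} (YY L)"
proof -
  have "continuous_on {0..1} (\<lambda>t. min t (max ((t + (1-L))/2) (max (t - L/4) (2*t-1))))"
    by (intro continuous_on_max continuous_on_min continuous_intros) auto
  then show ?thesis by (rule continuous_on_cong[THEN iffD1, rotated 2]) (auto simp: YY_def)
qed
lemma continuous_gen: "continuous_on {0..1} (gen e j)"
  by (simp add: gen_def continuous_XX continuous_YY)

lemma gen_img: "gen e j ` {0..1} \<subseteq> {0..1}" using gen_01 by force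

lemma comp_cont: "continuous_on {0..1} (gen d k \<circ> gen e j)"
  by (rule continuous_on_compose[OF continuous_gen continuous_on_subset[OF continuous_gen gen_img]])

lemma comp_bij: "bij_betw (gen d k \<circ> gen e j) {0..1} {0..1}"
proof (rule bij_betw_byWitness[where f' = "gen (\<not>e) j \<circ> gen (\<not>d) k"])
  show "\<forall>a\<in>{0..1}. (gen (\<not> e) j \<circ> gen (\<not> d) k) ((gen d k \<circ> gen e j) a) = a"
    by (simp add: gen_inv)
  show "\<forall>a'\<in>{0..1}. (gen d k \<circ> gen e j) ((gen (\<not> e) j \<circ> gen (\<not> d) k) a') = a'"
    by (simp add: gen_inv')
  show "(gen d k \<circ> gen e j) ` {0..1} \<subseteq> {0..1}" using gen_img by (auto simp: image_comp[symmetric]) (meson gen_01 atLeastAtMost_iff)+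
  show "(gen (\<not> e) j \<circ> gen (\<not> d) k) ` {0..1} \<subseteq> {0..1}" using gen_01 by fastforce
qed

lemma comp_out: "t \<notin> {0..1} \<Longrightarrow> (gen d k \<circ> gen e j) t = t"
  by (simp add: gen_out not_le)

lemma thompsonF_I:
  assumes "\<forall>t. t \<notin> {0..1} \<longrightarrow> f t = t" "bij_betw f {0..1} {0..1}" "continuous_on {0..1} f"
    "length bs \<ge> 2" "hd bs = 0" "last bs = 1" "sorted_wrt (<) bs" "\<forall>b\<in>set bs. dyadic b"
    "length ks = length bs - 1" "length cs = length bs - 1"
    "\<forall>i<length bs - 1. \<forall>t\<in>{bs!i..bs!(i+1)}. f t = 2 powr (of_int (ks!i)) * t + cs!i"
  shows "f \<in> thompsonF"
  unfolding thompsonF_def using assms by blast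

lemma id_thompson: "(\<lambda>t. t) \<in> thompsonF"
  by (rule thompsonF_I[where bs = "[0,1]" and ks = "[0]" and cs = "[0]"])
     (auto simp: bij_betw_def continuous_on_id dyadic_0 dyadic_1)




lemma h1_a: "0 < L \<Longrightarrow> L \<le> 1 \<Longrightarrow> 0 \<le> t \<Longrightarrow> t \<le> 1-L \<Longrightarrow> XX (L/2) (XX L t) = t"
  using XX_p1[of L t] XX_p1[of "L/2" t] by simp
lemma h1_b: assumes "0 < L" "L \<le> 1" "1-L \<le> t" "t \<le> 1 - 5*L/8" shows "XX (L/2) (XX L t) = 2*t - (1-L)"
proof (cases "t \<le> 1 - 3*L/4")
  case True
  then have "XX L t = 2*t - (1-L)" using XX_p2[of L t] assms by simp
  then show ?thesis using XX_p1[of "L/2" "2*t - (1-L)"] assms True by simp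
next
  case False
  then have "XX L t = t + L/4" using XX_p3[of L t] assms by simp
  then show ?thesis using XX_p2[of "L/2" "t + L/4"] assms False by simp
qed
lemma h1_c: assumes "0 < L" "L \<le> 1" "1 - 5*L/8 \<le> t" "t \<le> 1 - L/2" shows "XX (L/2) (XX L t) = t + 3*L/8"
proof -
  have "XX L t = t + L/4" using XX_p3[of L t] assms by simp
  then show ?thesis using XX_p3[of "L/2" "t + L/4"] assms by simp
qed
lemma h1_d: assumes "0 < L" "L \<le> 1" "1 - L/2 \<le> t" "t \<le> 1" shows "XX (L/2) (XX L t) = t/4 + 3/4"
proof -
  have e: "XX L t = (1+t)/2" using XX_p4[of L t] assms by simp
  have "XX (L/2) ((1+t)/2) = (1 + (1+t)/2)/2" by (rule XX_p4) (use assms in auto)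
  also have "\<dots> = t/4 + 3/4" by (simp add: field_simps)
  finally show ?thesis unfolding e .
qed

lemma h2_a: "0 < L \<Longrightarrow> L \<le> 1 \<Longrightarrow> 0 \<le> t \<Longrightarrow> t \<le> 1-L \<Longrightarrow> YY L (YY (L/2) t) = t"
  using YY_p1[of L t] YY_p1[of "L/2" t] by simp
lemma h2_b: assumes "0 < L" "L \<le> 1" "1-L \<le> t" "t \<le> 1 - L/4" shows "YY L (YY (L/2) t) = t/2 + (1-L)/2"
proof (cases "t \<le> 1 - L/2")
  case True
  then have "YY (L/2) t = t" using YY_p1[of "L/2" t] assms by simp
  then show ?thesis using YY_p2[of L t] assms True by (simp add: add_divide_distrib)
next
  case False
  then have e: "YY (L/2) t = (t + (1 - L/2))/2" using YY_p2[of "L/2" t] assms by simp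
  have "YY L ((t + (1 - L/2))/2) = (t + (1 - L/2))/2 - L/4" by (rule YY_p3) (use assms False in auto)
  also have "\<dots> = t/2 + (1-L)/2" by (simp add: field_simps)
  finally show ?thesis unfolding e .
qed
lemma h2_c: assumes "0 < L" "L \<le> 1" "1 - L/4 \<le> t" "t \<le> 1 - L/8" shows "YY L (YY (L/2) t) = t - 3*L/8"
proof -
  have "YY (L/2) t = t - L/8" using YY_p3[of "L/2" t] assms by simp
  then show ?thesis using YY_p3[of L "t - L/8"] assms by simp
qed
lemma h2_d: assumes "0 < L" "L \<le> 1" "1 - L/8 \<le> t" "t \<le> 1" shows "YY L (YY (L/2) t) = 4*t - 3"
proof -
  have "YY (L/2) t = 2*t - 1" using YY_p4[of "L/2" t] assms by simp
  then show ?thesis using YY_p4[of L "2*t-1"] assms by simp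
qed




lemma pw': "(2::real) powr - 2 = 1/4" "(2::real) powr - 1 = 1/2" "(2::real) powr 2 = 4"
  by (simp_all add: powr_minus powr_numeral)

lemma L_half: "(1::real)/2^(Suc j) = (1/2^j)/2" by simp

lemma dy_frac: "dyadic (real a / 2^m)"
  unfolding dyadic_def by (rule exI[of _ "int a"], rule exI[of _ m]) simp

lemma comp_props: "\<forall>t. t \<notin> {0..1} \<longrightarrow> (gen d k \<circ> gen e j) t = t"
  "bij_betw (gen d k \<circ> gen e j) {0..1} {0..1}" "continuous_on {0..1} (gen d k \<circ> gen e j)"
  using comp_out comp_bij comp_cont by auto

lemma h1_thompson: "gen True (Suc j) \<circ> gen True j \<in> thompsonF"
proof -
  define L where "L = (1::real)/2^j"
  have L: "0 < L" "L \<le> 1" unfolding L_def by auto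
  have eq: "(gen True (Suc j) \<circ> gen True j) t = XX (L/2) (XX L t)" for t
    unfolding gen_def L_def L_half by simp
  have eq': "gen True (Suc j) (gen True j t) = XX (L/2) (XX L t)" for t
    using eq[of t] by simp
  note cp = comp_props[of True "Suc j" True j]
  show ?thesis
  proof (cases "j = 0")
    case True
    then have L1: "L = 1" unfolding L_def by simp
    show ?thesis
    proof (rule thompsonF_I[OF cp, where bs = "[0, 3/8, 1/2, 1]" and ks = "[1,0,-2]" and cs = "[0,3/8,3/4]"])
      have "dyadic (real 3 / 2^3)" "dyadic (real 1 / 2^1)" by (rule dy_frac)+
      then show "\<forall>b\<in>set [0, 3/8, 1/2, 1]. dyadic b" using dyadic_0 dyadic_1 by simp
      show "\<forall>i<length [0, 3/8, 1/2, 1::real] - 1. \<forall>t\<in>{[0, 3/8, 1/2, 1] ! i..[0, 3/8, 1/2, 1] ! (i + 1)}.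
          (gen True (Suc j) \<circ> gen True j) t = 2 powr real_of_int ([1, 0, - 2] ! i) * t + [0, 3/8, 3/4] ! i"
        unfolding eq using h1_b[OF L] h1_c[OF L] h1_d[OF L] L1 by (auto simp: less_Suc_eq pw pw')
    qed auto
  next
    case False
    have "(2::real)^1 \<le> 2^j" using False by (intro power_increasing) auto
    then have L2: "L \<le> 1/2" unfolding L_def by (simp add: field_simps)
    show ?thesis
    proof (rule thompsonF_I[OF cp, where bs = "[0, 1-L, 1-5*L/8, 1-L/2, 1]" and ks = "[0,1,0,-2]" and cs = "[0, -(1-L), 3*L/8, 3/4]"])
      have e: "1 - real 1 / 2^j = 1 - L" "1 - real 5 / 2^(j+3) = 1 - 5*L/8" "1 - real 1 / 2^(j+1) = 1 - L/2"
        unfolding L_def by (simp_all add: power_add)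
      note dyadic_1m[of 1 j, unfolded e(1)] dyadic_1m[of 5 "j+3", unfolded e(2)] dyadic_1m[of 1 "j+1", unfolded e(3)]
      then show "\<forall>b\<in>set [0, 1-L, 1-5*L/8, 1-L/2, 1]. dyadic b" using dyadic_0 dyadic_1 by simp
      show "sorted_wrt (<) [0, 1-L, 1-5*L/8, 1-L/2, 1]" using L L2 by simp
      show "\<forall>i<length [0, 1-L, 1-5*L/8, 1-L/2, 1::real] - 1. \<forall>t\<in>{[0, 1-L, 1-5*L/8, 1-L/2, 1] ! i..[0, 1-L, 1-5*L/8, 1-L/2, 1] ! (i + 1)}.
          (gen True (Suc j) \<circ> gen True j) t = 2 powr real_of_int ([0,1,0,-2] ! i) * t + [0, -(1-L), 3*L/8, 3/4] ! i"
      proof (intro allI impI ballI)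
        fix i t assume i: "i < length [0, 1-L, 1-5*L/8, 1-L/2, 1::real] - 1"
          and t: "t \<in> {[0, 1-L, 1-5*L/8, 1-L/2, 1] ! i..[0, 1-L, 1-5*L/8, 1-L/2, 1] ! (i + 1)}"
        from i have "i = 0 \<or> i = 1 \<or> i = 2 \<or> i = 3" by auto
        then show "(gen True (Suc j) \<circ> gen True j) t = 2 powr real_of_int ([0,1,0,-2] ! i) * t + [0, -(1-L), 3*L/8, 3/4] ! i"
        proof (elim disjE)
          assume "i = 0" then show ?thesis using t h1_a[OF L, of t] by (simp add: eq')
        next
          assume "i = 1" then show ?thesis using t h1_b[OF L, of t] by (simp add: eq')
        next
          assume "i = 2" then show ?thesis using t h1_c[OF L, of t] by (simp add: eq')
        next
          assume "i = 3" then show ?thesis using t h1_d[OF L, of t] by (simp add: pw' eq')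
        qed
      qed
    qed auto
  qed
qed


lemma h2_thompson: "gen False j \<circ> gen False (Suc j) \<in> thompsonF"
proof -
  define L where "L = (1::real)/2^j"
  have L: "0 < L" "L \<le> 1" unfolding L_def by auto
  have eq: "(gen False j \<circ> gen False (Suc j)) t = YY L (YY (L/2) t)" for t
    unfolding gen_def L_def L_half by simp
  have eq': "gen False j (gen False (Suc j) t) = YY L (YY (L/2) t)" for t
    using eq[of t] by simp
  note cp = comp_props[of False j False "Suc j"]
  show ?thesis
  proof (cases "j = 0")
    case True
    then have L1: "L = 1" unfolding L_def by simp
    show ?thesis
    proof (rule thompsonF_I[OF cp, where bs = "[0, 3/4, 7/8, 1]" and ks = "[-1,0,2]" and cs = "[0,-3/8,-3]"])
      have "dyadic (real 3 / 2^2)" "dyadic (real 7 / 2^3)" by (rule dy_frac)+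
      then show "\<forall>b\<in>set [0, 3/4, 7/8, 1]. dyadic b" using dyadic_0 dyadic_1 by simp
      show "\<forall>i<length [0, 3/4, 7/8, 1::real] - 1. \<forall>t\<in>{[0, 3/4, 7/8, 1] ! i..[0, 3/4, 7/8, 1] ! (i + 1)}.
          (gen False j \<circ> gen False (Suc j)) t = 2 powr real_of_int ([-1, 0, 2] ! i) * t + [0, -3/8, -3] ! i"
        unfolding eq using h2_b[OF L] h2_c[OF L] h2_d[OF L] L1 by (auto simp: less_Suc_eq pw pw')
    qed auto
  next
    case False
    have "(2::real)^1 \<le> 2^j" using False by (intro power_increasing) auto
    then have L2: "L \<le> 1/2" unfolding L_def by (simp add: field_simps)
    show ?thesis
    proof (rule thompsonF_I[OF cp, where bs = "[0, 1-L, 1-L/4, 1-L/8, 1]" and ks = "[0,-1,0,2]" and cs = "[0, (1-L)/2, -(3*L/8), -3]"])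
      have e: "1 - real 1 / 2^j = 1 - L" "1 - real 1 / 2^(j+2) = 1 - L/4" "1 - real 1 / 2^(j+3) = 1 - L/8"
        unfolding L_def by (simp_all add: power_add)
      note dyadic_1m[of 1 j, unfolded e(1)] dyadic_1m[of 1 "j+2", unfolded e(2)] dyadic_1m[of 1 "j+3", unfolded e(3)]
      then show "\<forall>b\<in>set [0, 1-L, 1-L/4, 1-L/8, 1]. dyadic b" using dyadic_0 dyadic_1 by simp
      show "sorted_wrt (<) [0, 1-L, 1-L/4, 1-L/8, 1]" using L L2 by simp
      show "\<forall>i<length [0, 1-L, 1-L/4, 1-L/8, 1::real] - 1. \<forall>t\<in>{[0, 1-L, 1-L/4, 1-L/8, 1] ! i..[0, 1-L, 1-L/4, 1-L/8, 1] ! (i + 1)}.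
          (gen False j \<circ> gen False (Suc j)) t = 2 powr real_of_int ([0,-1,0,2] ! i) * t + [0, (1-L)/2, -(3*L/8), -3] ! i"
      proof (intro allI impI ballI)
        fix i t assume i: "i < length [0, 1-L, 1-L/4, 1-L/8, 1::real] - 1"
          and t: "t \<in> {[0, 1-L, 1-L/4, 1-L/8, 1] ! i..[0, 1-L, 1-L/4, 1-L/8, 1] ! (i + 1)}"
        from i have "i = 0 \<or> i = 1 \<or> i = 2 \<or> i = 3" by auto
        then show "(gen False j \<circ> gen False (Suc j)) t = 2 powr real_of_int ([0,-1,0,2] ! i) * t + [0, (1-L)/2, -(3*L/8), -3] ! i"
        proof (elim disjE)
          assume "i = 0" then show ?thesis using t h2_a[OF L, of t] by (simp add: eq')
        next
          assume "i = 1" then show ?thesis using t h2_b[OF L, of t] by (simp add: eq' pw')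
        next
          assume "i = 2" then show ?thesis using t h2_c[OF L, of t] by (simp add: eq')
        next
          assume "i = 3" then show ?thesis using t h2_d[OF L, of t] by (simp add: pw' eq')
        qed
      qed
    qed auto
  qed
qed




lemma sig_tau_iff: "sig e j = tau d k \<longleftrightarrow> j + (if e then 1 else 0) = k + (if d then 0 else 1)"
  unfolding sig_def tau_def th_inj by auto

lemma gen_comp_inv: "gen (\<not>e) j \<circ> gen e j = (\<lambda>t. t)"
  by (rule ext) (simp add: gen_inv)

lemma id_oriented: "(\<lambda>t. t) \<in> orientedF"
  unfolding orientedF_def using id_thompson by simp

lemma orient_iff:
  "gen d k \<circ> gen e j \<in> orientedF \<longleftrightarrow> j + (if e then 1 else 0) = k + (if d then 0 else 1)"
proof
  assume "gen d k \<circ> gen e j \<in> orientedF"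
  then have "(gen d k \<circ> gen e j) ` evenS = evenS" unfolding orientedF_def by simp
  then have "sig e j = tau d k" using comp_orient by simp
  then show "j + (if e then 1 else 0) = k + (if d then 0 else 1)"
    using sig_tau_iff by simp
next
  assume c: "j + (if e then 1 else 0) = k + (if d then 0 else 1)"
  then have "sig e j = tau d k" using sig_tau_iff by simp
  then have img: "(gen d k \<circ> gen e j) ` evenS = evenS" using comp_orient by simp
  have "gen d k \<circ> gen e j \<in> thompsonF"
  proof (cases e; cases d)
    assume "e" "d"
    then have "k = Suc j" using c by simp
    then show ?thesis using h1_thompson \<open>e\<close> \<open>d\<close> by simp
  next
    assume "e" "\<not>d"
    then have "k = j" using c by simp
    then show ?thesis using gen_comp_inv[of True j] id_thompson \<open>e\<close> \<open>\<not>d\<close> by simp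
  next
    assume "\<not>e" "d"
    then have "k = j" using c by simp
    then show ?thesis using gen_comp_inv[of False j] id_thompson \<open>\<not>e\<close> \<open>d\<close> by simp
  next
    assume "\<not>e" "\<not>d"
    then have "j = Suc k" using c by simp
    then show ?thesis using h2_thompson[of k] \<open>\<not>e\<close> \<open>\<not>d\<close> by simp
  qed
  then show "gen d k \<circ> gen e j \<in> orientedF" unfolding orientedF_def using img by simp
qed

lemma gen_inj: "gen e j = gen d k \<longleftrightarrow> e = d \<and> j = k"
proof
  assume eq: "gen e j = gen d k"
  have "gen (\<not>d) k \<circ> gen e j \<in> orientedF" using eq gen_comp_inv[of d k] id_oriented by simp
  then have 1: "j + (if e then 1 else 0) = k + (if d then 1 else 0)" using orient_iff[of "\<not>d" k e j] by simp
  have "gen e j \<circ> gen (\<not>e) j \<in> orientedF"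
    using gen_comp_inv[of "\<not>e" j] id_oriented by simp
  then have "gen d k \<circ> gen (\<not>e) j \<in> orientedF" using eq by simp
  then have 2: "j + (if e then 0 else 1) = k + (if d then 0 else 1)" using orient_iff[of d k "\<not>e" j] by (cases e; cases d) simp_all
  from 1 2 show "e = d \<and> j = k" by (cases e; cases d) simp_all
qed simp

lemma xgen_gen: "xgen k = gen True k" by (simp add: xgen_eq gen_def)

lemma finv_gen: "finv (xgen k) = gen False k"
proof
  fix t
  show "finv (xgen k) t = gen False k t"
  proof (cases "t \<in> {0..1}")
    case True
    have inj: "inj_on (gen True k) {0..1}"
      by (rule inj_on_inverseI[where g = "gen False k"]) (rule gen_inv[of True, simplified])
    have "the_inv_into {0..1} (gen True k) t = gen False k t"
    proof (rule the_inv_into_f_eq[OF inj])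
      show "gen True k (gen False k t) = t" using gen_inv'[of True k t] by simp
      show "gen False k t \<in> {0..1}" using gen_01[of t False k] True by simp
    qed
    then show ?thesis using True by (simp add: finv_def xgen_gen)
  next
    case False
    then have "finv (xgen k) t = t" unfolding finv_def by auto
    then show ?thesis using False by (simp add: gen_out not_le)
  qed
qed




lemma gmult_const:
  fixes c :: complex
  assumes s: "\<And>h. s h = (if h \<in> A then c else 0)" and c: "c \<noteq> 0"
  shows "gmult s s h = of_nat (card {p \<in> A \<times> A. snd p \<circ> fst p = h}) * (c*c)"
proof -
  have 1: "{p. s (fst p) \<noteq> 0 \<and> s (snd p) \<noteq> 0 \<and> snd p \<circ> fst p = h} = {p \<in> A \<times> A. snd p \<circ> fst p = h}"
    using c unfolding s by (auto simp: mem_Times_iff)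
  have 2: "\<And>p. p \<in> {p \<in> A \<times> A. snd p \<circ> fst p = h} \<Longrightarrow> s (fst p) * s (snd p) = c * c"
    unfolding s by (auto simp: mem_Times_iff)
  have "gmult s s h = (\<Sum>p \<in> {p \<in> A \<times> A. snd p \<circ> fst p = h}. c * c)"
    unfolding gmult_def 1 using 2 by (rule sum.cong[OF refl])
  then show ?thesis by simp
qed
lemma theta_const:
  fixes c :: complex
  assumes s: "\<And>h. s h = (if h \<in> A then c else 0)" and c: "c \<noteq> 0" and fin: "finite A"
  shows "theta (gmult s s) = of_nat (card {p \<in> A \<times> A. snd p \<circ> fst p \<in> orientedF}) * (c*c)"
proof -
  define Q where "Q = {p \<in> A \<times> A. snd p \<circ> fst p \<in> orientedF}"
  define cmp where "cmp = (\<lambda>p::(real\<Rightarrow>real)\<times>(real\<Rightarrow>real). snd p \<circ> fst p)"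
  have finAA: "finite (A \<times> A)" using fin by simp
  have finQ: "finite Q" unfolding Q_def using finAA by simp
  have gm: "gmult s s h = of_nat (card {p \<in> A \<times> A. cmp p = h}) * (c*c)" for h
    unfolding cmp_def by (rule gmult_const[OF s c])
  have cc: "c * c \<noteq> 0" using c by simp
  have nz: "gmult s s h \<noteq> 0 \<longleftrightarrow> h \<in> cmp ` (A \<times> A)" for h
  proof -
    have "gmult s s h \<noteq> 0 \<longleftrightarrow> card {p \<in> A \<times> A. cmp p = h} \<noteq> 0" using gm cc by simp
    also have "\<dots> \<longleftrightarrow> {p \<in> A \<times> A. cmp p = h} \<noteq> {}" using finAA by simp
    also have "\<dots> \<longleftrightarrow> h \<in> cmp ` (A \<times> A)" by auto
    finally show ?thesis .
  qed
  have H: "{h. gmult s s h \<noteq> 0 \<and> h \<in> orientedF} = cmp ` Q"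
  proof
    show "{h. gmult s s h \<noteq> 0 \<and> h \<in> orientedF} \<subseteq> cmp ` Q"
    proof
      fix h assume "h \<in> {h. gmult s s h \<noteq> 0 \<and> h \<in> orientedF}"
      then have "h \<in> cmp ` (A \<times> A)" "h \<in> orientedF" using nz by auto
      then obtain p where "p \<in> A \<times> A" "h = cmp p" by blast
      then show "h \<in> cmp ` Q" using \<open>h \<in> orientedF\<close> unfolding Q_def cmp_def by blast
    qed
    show "cmp ` Q \<subseteq> {h. gmult s s h \<noteq> 0 \<and> h \<in> orientedF}"
    proof
      fix h assume "h \<in> cmp ` Q"
      then obtain p where p: "p \<in> Q" "h = cmp p" by blast
      then have "h \<in> cmp ` (A \<times> A)" "h \<in> orientedF" unfolding Q_def cmp_def by auto
      then show "h \<in> {h. gmult s s h \<noteq> 0 \<and> h \<in> orientedF}" using nz by blast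
    qed
  qed
  have fib: "h \<in> cmp ` Q \<Longrightarrow> {p \<in> A \<times> A. cmp p = h} = {p \<in> Q. cmp p = h}" for h
  proof -
    assume "h \<in> cmp ` Q"
    then have "h \<in> orientedF" unfolding Q_def cmp_def by auto
    then show ?thesis unfolding Q_def cmp_def by blast
  qed
  have "theta (gmult s s) = (\<Sum>h \<in> cmp ` Q. of_nat (card {p \<in> Q. cmp p = h}) * (c*c))"
    unfolding theta_def H using gm fib by (intro sum.cong) simp_all
  also have "\<dots> = of_nat (\<Sum>h \<in> cmp ` Q. card {p \<in> Q. cmp p = h}) * (c*c)"
    by (simp add: sum_distrib_right)
  also have "(\<Sum>h \<in> cmp ` Q. card {p \<in> Q. cmp p = h}) = card Q"
  proof -
    have "(\<Sum>h \<in> cmp ` Q. \<Sum>p \<in> {p \<in> Q. cmp p = h}. (1::nat)) = (\<Sum>p \<in> Q. 1)"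
      by (rule sum.group[OF finQ]) (use finQ in auto)
    then show ?thesis by simp
  qed
  finally show ?thesis unfolding Q_def cmp_def .
qed




definition Gs :: "nat \<Rightarrow> (real \<Rightarrow> real) set" where
  "Gs n = (\<lambda>(e,j). gen e j) ` (UNIV \<times> {..<n})"

lemma Gs_finite: "finite (Gs n)" unfolding Gs_def by simp

lemma count_gen:
  "(\<Sum>k<n. gelt (gen True k) h + gelt (gen False k) h) = (if h \<in> Gs n then 1 else 0)"
proof (cases "h \<in> Gs n")
  case True
  then obtain e j where h: "h = gen e j" "j < n" unfolding Gs_def by auto
  have "(\<Sum>k<n. gelt (gen True k) h + gelt (gen False k) h) = (\<Sum>k<n. if k = j then 1 else 0)"
  proof (rule sum.cong[OF refl])
    fix k assume "k \<in> {..<n}"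
    have a: "gen e j = gen True k \<longleftrightarrow> e \<and> j = k" "gen e j = gen False k \<longleftrightarrow> \<not> e \<and> j = k"
      using gen_inj[of e j _ k] by auto
    show "gelt (gen True k) h + gelt (gen False k) h = (if k = j then 1 else 0)"
      unfolding gelt_def h(1) a by (cases e) auto
  qed
  also have "\<dots> = 1" using h by simp
  finally show ?thesis using True by simp
next
  case False
  have nk: "h \<noteq> gen True k \<and> h \<noteq> gen False k" if "k < n" for k
  proof -
    have "(True, k) \<in> UNIV \<times> {..<n}" "(False, k) \<in> UNIV \<times> {..<n}" using that by auto
    then have "gen True k \<in> Gs n" "gen False k \<in> Gs n" unfolding Gs_def by force+
    then show ?thesis using False by auto
  qed
  have "(\<Sum>k<n. gelt (gen True k) h + gelt (gen False k) h) = (\<Sum>k<n. 0)"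
  proof (rule sum.cong[OF refl])
    fix k assume "k \<in> {..<n}"
    then show "gelt (gen True k) h + gelt (gen False k) h = 0" using nk[of k] unfolding gelt_def by simp
  qed
  then show ?thesis using False by simp
qed

definition cst :: "nat \<Rightarrow> complex" where
  "cst n = 1 / (complex_of_real (sqrt 2) * complex_of_real (sqrt (real n)))"

lemma s_elt_val: "s_elt n h = (if h \<in> Gs n then cst n else 0)"
proof -
  have "(\<Sum>k<n. a_elt k h) = (\<Sum>k<n. gelt (gen True k) h + gelt (gen False k) h) / complex_of_real (sqrt 2)"
    unfolding a_elt_def xgen_gen[symmetric] finv_gen[symmetric] by (simp add: sum_divide_distrib)
  then show ?thesis unfolding s_elt_def count_gen cst_def by simp
qed

lemma cst_sq: "n \<ge> 1 \<Longrightarrow> cst n * cst n = 1 / (2 * of_nat n)"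
proof -
  assume n: "n \<ge> 1"
  have "complex_of_real (sqrt 2) * complex_of_real (sqrt 2) = complex_of_real (sqrt 2 * sqrt 2)"
    by (simp only: of_real_mult)
  also have "\<dots> = 2" by simp
  finally have 1: "complex_of_real (sqrt 2) * complex_of_real (sqrt 2) = 2" .
  have "complex_of_real (sqrt (real n)) * complex_of_real (sqrt (real n)) = complex_of_real (sqrt (real n) * sqrt (real n))"
    by (simp only: of_real_mult)
  also have "\<dots> = of_nat n" by simp
  finally have 2: "complex_of_real (sqrt (real n)) * complex_of_real (sqrt (real n)) = of_nat n" .
  show ?thesis unfolding cst_def using 1 2 by (simp add: field_simps)
qed

lemma cst_nz: "n \<ge> 1 \<Longrightarrow> cst n \<noteq> 0"
  unfolding cst_def by simp




definition Iset :: "nat \<Rightarrow> ((bool \<times> nat) \<times> (bool \<times> nat)) set" where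
  "Iset n = {((e,j),(d,k)). j < n \<and> k < n \<and> j + (if e then 1 else 0) = k + (if d then 0 else 1)}"

definition phi :: "(bool \<times> nat) \<times> (bool \<times> nat) \<Rightarrow> (real \<Rightarrow> real) \<times> (real \<Rightarrow> real)" where
  "phi x = (gen (fst (fst x)) (snd (fst x)), gen (fst (snd x)) (snd (snd x)))"

lemma Q_eq: "{p \<in> Gs n \<times> Gs n. snd p \<circ> fst p \<in> orientedF} = phi ` Iset n"
proof
  show "{p \<in> Gs n \<times> Gs n. snd p \<circ> fst p \<in> orientedF} \<subseteq> phi ` Iset n"
  proof
    fix p assume p: "p \<in> {p \<in> Gs n \<times> Gs n. snd p \<circ> fst p \<in> orientedF}"
    then obtain e j d k where ej: "fst p = gen e j" "j < n" "snd p = gen d k" "k < n"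
      unfolding Gs_def by auto
    have "gen d k \<circ> gen e j \<in> orientedF" using p ej by simp
    then have "((e,j),(d,k)) \<in> Iset n" unfolding Iset_def using ej orient_iff by simp
    moreover have "p = phi ((e,j),(d,k))" unfolding phi_def using ej by (simp add: prod_eq_iff)
    ultimately show "p \<in> phi ` Iset n" by blast
  qed
  show "phi ` Iset n \<subseteq> {p \<in> Gs n \<times> Gs n. snd p \<circ> fst p \<in> orientedF}"
  proof
    fix p assume "p \<in> phi ` Iset n"
    then obtain e j d k where x: "((e,j),(d,k)) \<in> Iset n" "p = phi ((e,j),(d,k))" by auto
    have jk: "j < n" "k < n" "j + (if e then 1 else 0) = k + (if d then 0 else 1)" using x unfolding Iset_def by auto
    have "gen e j \<in> Gs n" "gen d k \<in> Gs n" unfolding Gs_def using jk by force+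
    moreover have "gen d k \<circ> gen e j \<in> orientedF" using orient_iff jk by simp
    ultimately show "p \<in> {p \<in> Gs n \<times> Gs n. snd p \<circ> fst p \<in> orientedF}" using x unfolding phi_def by simp
  qed
qed

lemma phi_inj: "inj_on phi A"
proof (rule inj_onI)
  fix x y assume "phi x = phi y"
  then show "x = y" unfolding phi_def by (simp add: gen_inj prod_eq_iff)
qed

lemma Iset_eq: "Iset n = (\<lambda>j. ((True,j),(True,Suc j))) ` {..<n-1} \<union> (\<lambda>j. ((True,j),(False,j))) ` {..<n}
   \<union> (\<lambda>j. ((False,j),(True,j))) ` {..<n} \<union> (\<lambda>k. ((False,Suc k),(False,k))) ` {..<n-1}"
  (is "_ = ?A1 \<union> ?A2 \<union> ?A3 \<union> ?A4")
proof
  show "Iset n \<subseteq> ?A1 \<union> ?A2 \<union> ?A3 \<union> ?A4"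
  proof
    fix x assume x: "x \<in> Iset n"
    obtain e j d k where xe: "x = ((e,j),(d,k))" by (metis prod.exhaust)
    have c: "j < n" "k < n" "j + (if e then 1 else 0) = k + (if d then 0 else 1)" using x xe unfolding Iset_def by auto
    show "x \<in> ?A1 \<union> ?A2 \<union> ?A3 \<union> ?A4"
    proof (cases e; cases d)
      assume "e" "d" then have "k = Suc j" "j < n - 1" using c by auto
      then have "x \<in> ?A1" using xe \<open>e\<close> \<open>d\<close> by auto
      then show ?thesis by blast
    next
      assume "e" "\<not>d" then have "k = j" using c by auto
      then have "x \<in> ?A2" using xe \<open>e\<close> \<open>\<not>d\<close> c by auto
      then show ?thesis by blast
    next
      assume "\<not>e" "d" then have "k = j" using c by auto
      then have "x \<in> ?A3" using xe \<open>\<not>e\<close> \<open>d\<close> c by auto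
      then show ?thesis by blast
    next
      assume "\<not>e" "\<not>d" then have "j = Suc k" "k < n - 1" using c by auto
      then have "x \<in> ?A4" using xe \<open>\<not>e\<close> \<open>\<not>d\<close> by auto
      then show ?thesis by blast
    qed
  qed
  show "?A1 \<union> ?A2 \<union> ?A3 \<union> ?A4 \<subseteq> Iset n" unfolding Iset_def by auto
qed

lemma card_Iset: "n \<ge> 1 \<Longrightarrow> card (Iset n) = 4*n - 2"
proof -
  assume n: "n \<ge> 1"
  let ?A1 = "(\<lambda>j. ((True,j),(True,Suc j))) ` {..<n-1}"
  let ?A2 = "(\<lambda>j. ((True,j),(False,j))) ` {..<n}"
  let ?A3 = "(\<lambda>j. ((False,j),(True,j))) ` {..<n}"
  let ?A4 = "(\<lambda>k. ((False,Suc k),(False,k))) ` {..<n-1}"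
  have c1: "card ?A1 = n - 1" by (subst card_image) (auto simp: inj_on_def)
  have c2: "card ?A2 = n" by (subst card_image) (auto simp: inj_on_def)
  have c3: "card ?A3 = n" by (subst card_image) (auto simp: inj_on_def)
  have c4: "card ?A4 = n - 1" by (subst card_image) (auto simp: inj_on_def)
  have "card (?A1 \<union> ?A2 \<union> ?A3 \<union> ?A4) = card (?A1 \<union> ?A2 \<union> ?A3) + card ?A4"
    by (rule card_Un_disjoint) auto
  also have "card (?A1 \<union> ?A2 \<union> ?A3) = card (?A1 \<union> ?A2) + card ?A3"
    by (rule card_Un_disjoint) auto
  also have "card (?A1 \<union> ?A2) = card ?A1 + card ?A2"
    by (rule card_Un_disjoint) auto
  finally show ?thesis unfolding Iset_eq[symmetric] using c1 c2 c3 c4 n by simp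
qed

lemma card_Q: "n \<ge> 1 \<Longrightarrow> card {p \<in> Gs n \<times> Gs n. snd p \<circ> fst p \<in> orientedF} = 4*n - 2"
  unfolding Q_eq using card_image[OF phi_inj] card_Iset by simp

lemma theta_n: assumes "n \<ge> 1"
  shows "theta (gmult (s_elt n) (s_elt n)) = of_nat (4*n - 2) / (2 * of_nat n)"
proof -
  have "theta (gmult (s_elt n) (s_elt n)) = of_nat (card {p \<in> Gs n \<times> Gs n. snd p \<circ> fst p \<in> orientedF}) * (cst n * cst n)"
    by (rule theta_const[OF s_elt_val cst_nz[OF assms] Gs_finite])
  then show ?thesis using card_Q[OF assms] cst_sq[OF assms] by simp
qed

theorem mainTheorem13:
  shows "(\<forall>n::nat. n \<ge> 1 \<longrightarrow>
            2 * of_nat n * theta (gmult (s_elt n) (s_elt n)) = 4 * of_nat n - 2)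
         \<and> (\<lambda>n. theta (gmult (s_elt n) (s_elt n))) \<longlonglongrightarrow> 2"
proof
  have val: "theta (gmult (s_elt n) (s_elt n)) = 2 - 1 / of_nat n" if n: "n \<ge> 1" for n
  proof -
    have "of_nat (4*n - 2) = (4 * of_nat n - 2 :: complex)" using n by (simp add: of_nat_diff)
    then have "theta (gmult (s_elt n) (s_elt n)) = (4 * of_nat n - 2) / (2 * of_nat n)"
      using theta_n[OF n] by simp
    also have "\<dots> = 2 - 1 / of_nat n" using n by (simp add: field_simps)
    finally show ?thesis .
  qed
  show "\<forall>n::nat. n \<ge> 1 \<longrightarrow> 2 * of_nat n * theta (gmult (s_elt n) (s_elt n)) = 4 * of_nat n - 2"
  proof (intro allI impI)
    fix n :: nat assume n: "n \<ge> 1"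
    have "2 * of_nat n * theta (gmult (s_elt n) (s_elt n)) = 2 * of_nat n * (2 - 1 / (of_nat n :: complex))"
      using val[OF n] by simp
    also have "\<dots> = 4 * of_nat n - 2" using n by (simp add: field_simps)
    finally show "2 * of_nat n * theta (gmult (s_elt n) (s_elt n)) = 4 * of_nat n - 2" .
  qed
  have "(\<lambda>n. 2 - 1 / of_nat n :: complex) \<longlonglongrightarrow> 2 - 0"
    by (intro tendsto_diff tendsto_const lim_1_over_n)
  then have lim: "(\<lambda>n. 2 - 1 / of_nat n :: complex) \<longlonglongrightarrow> 2" by simp
  have ev: "eventually (\<lambda>n. theta (gmult (s_elt n) (s_elt n)) = 2 - 1 / of_nat n) sequentially"
    using eventually_ge_at_top[of "1::nat"] by (rule eventually_mono) (rule val)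
  show "(\<lambda>n. theta (gmult (s_elt n) (s_elt n))) \<longlonglongrightarrow> 2"
    unfolding tendsto_cong[OF ev] by (rule lim)
qed


end
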